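(* Let $\alpha\neq 0$ be real. Let $S$ be a spacelike surface in $\mathbb L^3$ invariant under the rotations about the $x$-axis, parametrized by $X(x,\theta)=(x,u(x)\sinh\theta,u(x)\cosh\theta)$, $x\in I$, $\theta\in\mathbb R$, with $u>0$. If $S$ is an $\alpha$-singular maximal surface, then its generating curve $z=u(x)$ in the plane $y=0$ (identified with $\mathbb L^2$) satisfies the one-dimensional $(\alpha-1)$-singular maximal equation $$\frac{u''}{1-u'^2}=\frac{\alpha-1}{u}.$$ Conversely, if $u>0$ with $u'^2<1$ satisfies $\frac{u''}{1-u'^2}=\frac{\alpha}{u}$, then the surface $X(x,\theta)=(x,u(x)\sinh\theta,u(x)\cosh\theta)$ is an $(\alpha+1)$-singular maximal surface invariant by all rotations about the $x$-axis.
   Context: $\mathbb L^3$ is $\mathbb R^3$ with the metric $dx^2+dy^2-dz^2$. A spacelike surface has Riemannian induced metric and timelike unit normal $N$; $H$ is the trace of its second fundamental form. For $\beta\in\mathbb R$, a $\beta$-singular maximal surface is a spacelike surface in the halfspace $z>0$ with $H(p)=-\beta\frac{\langle N(p),\vec a\rangle}{z}$ for all $p$, where $\vec a=(0,0,1)$ and $N$ is a unit normal field. *)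

theory Defs
  imports "HOL-Analysis.Analysis"
begin

definition linner :: "real^3 \<Rightarrow> real^3 \<Rightarrow> real" where
  "linner a b = a$1 * b$1 + a$2 * b$2 - a$3 * b$3"

definition avec :: "real^3" where
  "avec = vector [0, 0, 1]"

definition Xs :: "(real \<Rightarrow> real \<Rightarrow> real^3) \<Rightarrow> real \<Rightarrow> real \<Rightarrow> real^3" where
  "Xs X s t = vector_derivative (\<lambda>r. X r t) (at s)"
definition Xt :: "(real \<Rightarrow> real \<Rightarrow> real^3) \<Rightarrow> real \<Rightarrow> real \<Rightarrow> real^3" where
  "Xt X s t = vector_derivative (\<lambda>r. X s r) (at t)"
definition Xss :: "(real \<Rightarrow> real \<Rightarrow> real^3) \<Rightarrow> real \<Rightarrow> real \<Rightarrow> real^3" where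
  "Xss X s t = vector_derivative (\<lambda>r. Xs X r t) (at s)"
definition Xst :: "(real \<Rightarrow> real \<Rightarrow> real^3) \<Rightarrow> real \<Rightarrow> real \<Rightarrow> real^3" where
  "Xst X s t = vector_derivative (\<lambda>r. Xs X s r) (at t)"
definition Xtt :: "(real \<Rightarrow> real \<Rightarrow> real^3) \<Rightarrow> real \<Rightarrow> real \<Rightarrow> real^3" where
  "Xtt X s t = vector_derivative (\<lambda>r. Xt X s r) (at t)"

definition EE where "EE X s t = linner (Xs X s t) (Xs X s t)"
definition FF where "FF X s t = linner (Xs X s t) (Xt X s t)"
definition GG where "GG X s t = linner (Xt X s t) (Xt X s t)"

definition spacelike_surface :: "(real \<Rightarrow> real \<Rightarrow> real^3) \<Rightarrow> (real \<times> real) set \<Rightarrow> bool" where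
  "spacelike_surface X U \<longleftrightarrow> open U \<and>
     (\<forall>(s,t)\<in>U.
        (\<lambda>r. X r t) differentiable (at s) \<and> (\<lambda>r. X s r) differentiable (at t) \<and>
        (\<lambda>r. Xs X r t) differentiable (at s) \<and> (\<lambda>r. Xs X s r) differentiable (at t) \<and>
        (\<lambda>r. Xt X s r) differentiable (at t) \<and>
        EE X s t > 0 \<and> EE X s t * GG X s t - (FF X s t)^2 > 0)"

definition unit_normal :: "(real \<Rightarrow> real \<Rightarrow> real^3) \<Rightarrow> real^3 \<Rightarrow> real \<Rightarrow> real \<Rightarrow> bool" where
  "unit_normal X N s t \<longleftrightarrow>
     linner N (Xs X s t) = 0 \<and> linner N (Xt X s t) = 0 \<and> linner N N = -1"

text \<open>Mean curvature H = trace of the second fundamental form, w.r.t. the unit normal N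
  (the vector-valued trace sigma equals H N; since the normal bundle projection is
  v \<mapsto> - <v,N> N, this gives H = - g^{ij} <X_ij, N>).\<close>
definition mean_curv :: "(real \<Rightarrow> real \<Rightarrow> real^3) \<Rightarrow> real^3 \<Rightarrow> real \<Rightarrow> real \<Rightarrow> real" where
  "mean_curv X N s t =
     - (linner (Xss X s t) N * GG X s t - 2 * linner (Xst X s t) N * FF X s t
        + linner (Xtt X s t) N * EE X s t)
       / (EE X s t * GG X s t - (FF X s t)^2)"

definition singular_maximal :: "real \<Rightarrow> (real \<Rightarrow> real \<Rightarrow> real^3) \<Rightarrow> (real \<times> real) set \<Rightarrow> bool" where
  "singular_maximal \<beta> X U \<longleftrightarrow> spacelike_surface X U \<and>
     (\<forall>(s,t)\<in>U. X s t $ 3 > 0) \<and>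
     (\<exists>N :: real \<times> real \<Rightarrow> real^3. continuous_on U N \<and>
        (\<forall>(s,t)\<in>U. unit_normal X (N (s,t)) s t \<and>
           mean_curv X (N (s,t)) s t = - \<beta> * linner (N (s,t)) avec / (X s t $ 3)))"

definition rot_surface :: "(real \<Rightarrow> real) \<Rightarrow> real \<Rightarrow> real \<Rightarrow> real^3" where
  "rot_surface u x \<theta> = vector [x, u x * sinh \<theta>, u x * cosh \<theta>]"

definition xrot :: "real \<Rightarrow> real^3 \<Rightarrow> real^3" where
  "xrot \<phi> p = vector [p$1, p$2 * cosh \<phi> + p$3 * sinh \<phi>, p$2 * sinh \<phi> + p$3 * cosh \<phi>]"

end

theory Submission
  imports Defs
begin
definition e1 :: "real^3" where "e1 = vector [1,0,0]"
definition e2 :: "real^3" where "e2 = vector [0,1,0]"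
definition e3 :: "real^3" where "e3 = vector [0,0,1]"
lemma vec3_split: "(vector [a,b,c] :: real^3) = a *\<^sub>R e1 + b *\<^sub>R e2 + c *\<^sub>R e3"
  by (simp add: vec_eq_iff forall_3 vector_3 e1_def e2_def e3_def)
lemma vec3_deriv:
  assumes "(f has_real_derivative f') (at x)" "(g has_real_derivative g') (at x)" "(h has_real_derivative h') (at x)"
  shows "((\<lambda>r. vector [f r, g r, h r] :: real^3) has_vector_derivative vector [f', g', h']) (at x)"
  unfolding vec3_split
  by (rule derivative_eq_intros assms | simp)+
lemma ch1: "cosh t * (cosh t * x) = x + sinh t * (sinh t * (x::real))"
  using cosh_square_eq[of t] by (simp add: power2_eq_square algebra_simps)
lemma ch2: "cosh t * cosh t = 1 + sinh t * (sinh t::real)"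
  using cosh_square_eq[of t] by (simp add: power2_eq_square algebra_simps)
lemma linner3: "linner (vector [a,b,c]) (vector [d,e,f]) = a*d+b*e-c*f"
  by (simp add: linner_def)

locale rs =
  fixes u u' u'' :: "real \<Rightarrow> real" and I :: "real set"
  assumes oI: "open I"
    and d1: "\<forall>x\<in>I. (u has_real_derivative u' x) (at x)"
    and d2: "\<forall>x\<in>I. (u' has_real_derivative u'' x) (at x)"
begin
abbreviation "R \<equiv> rot_surface u"

lemma hXs: "s \<in> I \<Longrightarrow> ((\<lambda>r. R r t) has_vector_derivative vector [1, u' s * sinh t, u' s * cosh t]) (at s)"
  unfolding rot_surface_def
  by (rule vec3_deriv) (auto intro!: derivative_eq_intros d1[rule_format])
lemma Xs_eq: "s \<in> I \<Longrightarrow> Xs R s t = vector [1, u' s * sinh t, u' s * cosh t]"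
  unfolding Xs_def by (rule vector_derivative_at[OF hXs])
lemma hXt: "((\<lambda>r. R s r) has_vector_derivative vector [0, u s * cosh t, u s * sinh t]) (at t)"
  unfolding rot_surface_def
  by (rule vec3_deriv) (auto intro!: derivative_eq_intros)
lemma Xt_eq: "Xt R s t = vector [0, u s * cosh t, u s * sinh t]"
  unfolding Xt_def by (rule vector_derivative_at[OF hXt])
lemma hXss: "s \<in> I \<Longrightarrow> ((\<lambda>r. Xs R r t) has_vector_derivative vector [0, u'' s * sinh t, u'' s * cosh t]) (at s)"
  apply (rule has_vector_derivative_transform_within_open[where S=I and f="\<lambda>r. vector [1, u' r * sinh t, u' r * cosh t]"])
  apply (rule vec3_deriv) 
  by (auto intro!: derivative_eq_intros d2[rule_format] simp: oI Xs_eq)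
lemma Xss_eq: "s \<in> I \<Longrightarrow> Xss R s t = vector [0, u'' s * sinh t, u'' s * cosh t]"
  unfolding Xss_def by (rule vector_derivative_at[OF hXss])
lemma hXst: "s \<in> I \<Longrightarrow> ((\<lambda>r. Xs R s r) has_vector_derivative vector [0, u' s * cosh t, u' s * sinh t]) (at t)"
  unfolding Xs_eq
  by (rule vec3_deriv) (auto intro!: derivative_eq_intros)
lemma Xst_eq: "s \<in> I \<Longrightarrow> Xst R s t = vector [0, u' s * cosh t, u' s * sinh t]"
  unfolding Xst_def by (rule vector_derivative_at[OF hXst])
lemma hXtt: "((\<lambda>r. Xt R s r) has_vector_derivative vector [0, u s * sinh t, u s * cosh t]) (at t)"
  unfolding Xt_eq
  by (rule vec3_deriv) (auto intro!: derivative_eq_intros)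
lemma Xtt_eq: "Xtt R s t = vector [0, u s * sinh t, u s * cosh t]"
  unfolding Xtt_def by (rule vector_derivative_at[OF hXtt])
lemma EE_eq: "s \<in> I \<Longrightarrow> EE R s t = 1 - (u' s)^2"
  unfolding EE_def Xs_eq linner3 by (simp add: algebra_simps power2_eq_square ch1)
lemma FF_eq: "s \<in> I \<Longrightarrow> FF R s t = 0"
  unfolding FF_def Xs_eq Xt_eq linner3 by (simp add: algebra_simps)
lemma GG_eq: "GG R s t = (u s)^2"
  unfolding GG_def Xt_eq linner3 by (simp add: algebra_simps power2_eq_square ch1)
end

theorem proposition2p4:
  fixes u u' u'' :: "real \<Rightarrow> real" and I :: "real set" and \<alpha> :: real
  assumes "\<alpha> \<noteq> 0"
    and "open I" and "is_interval I"
    and "\<forall>x\<in>I. u x > 0"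
    and "\<forall>x\<in>I. (u has_real_derivative u' x) (at x)"
    and "\<forall>x\<in>I. (u' has_real_derivative u'' x) (at x)"
  shows "(singular_maximal \<alpha> (rot_surface u) (I \<times> UNIV) \<longrightarrow>
            (\<forall>x\<in>I. u'' x / (1 - (u' x)^2) = (\<alpha> - 1) / u x))
       \<and> ((\<forall>x\<in>I. (u' x)^2 < 1 \<and> u'' x / (1 - (u' x)^2) = \<alpha> / u x) \<longrightarrow>
            singular_maximal (\<alpha> + 1) (rot_surface u) (I \<times> UNIV) \<and>
            (\<forall>\<phi>. xrot \<phi> ` ((\<lambda>(x,\<theta>). rot_surface u x \<theta>) ` (I \<times> UNIV))
                  = (\<lambda>(x,\<theta>). rot_surface u x \<theta>) ` (I \<times> UNIV)))"
proof -
  interpret rs u u' u'' I using assms by unfold_locales auto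
  have upos: "\<And>x. x \<in> I \<Longrightarrow> u x > 0" using assms by auto
  have part1: "\<forall>x\<in>I. u'' x / (1 - (u' x)^2) = (\<alpha> - 1) / u x"
    if SM: "singular_maximal \<alpha> R (I \<times> UNIV)"
  proof
    fix x assume xI: "x \<in> I"
    from SM obtain N where sl: "spacelike_surface R (I \<times> UNIV)"
      and NN: "\<forall>(s,t)\<in>I \<times> UNIV. unit_normal R (N (s,t)) s t \<and>
           mean_curv R (N (s,t)) s t = - \<alpha> * linner (N (s,t)) avec / (R s t $ 3)"
      unfolding singular_maximal_def by blast
    have "EE R x 0 > 0" using sl xI unfolding spacelike_surface_def by auto
    hence E: "1 - (u' x)^2 > 0" using EE_eq[OF xI] by simp
    define n where "n = N (x,0)"
    have un: "unit_normal R n x 0" and mc: "mean_curv R n x 0 = - \<alpha> * linner n avec / (R x 0 $ 3)"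
      using NN xI unfolding n_def by auto
    have ux: "u x > 0" using upos xI .
    have e1: "n$1 - n$3 * u' x = 0" and e2: "n$2 * u x = 0" and e3: "n$1*n$1 + n$2*n$2 - n$3*n$3 = -1"
      using un unfolding unit_normal_def linner_def Xs_eq[OF xI] Xt_eq by auto
    have n2: "n$2 = 0" using e2 ux by simp
    have n1: "n$1 = n$3 * u' x" using e1 by simp
    have n3: "n$3 \<noteq> 0" using e3 n1 n2 by auto
    have "mean_curv R n x 0 = - ((- n$3 * u'' x) * (u x)^2 + (- n$3 * u x) * (1 - (u' x)^2)) / ((1 - (u' x)^2) * (u x)^2)"
      unfolding mean_curv_def Xss_eq[OF xI] Xst_eq[OF xI] Xtt_eq EE_eq[OF xI] FF_eq[OF xI] GG_eq
      by (simp add: linner_def)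
    moreover have "- \<alpha> * linner n avec / (R x 0 $ 3) = \<alpha> * n$3 / u x"
      by (simp add: linner_def avec_def rot_surface_def)
    ultimately have eq: "((n$3 * u'' x) * (u x)^2 + (n$3 * u x) * (1 - (u' x)^2)) / ((1 - (u' x)^2) * (u x)^2) = \<alpha> * n$3 / u x"
      using mc by (simp add: add.commute)
    have d1: "(1 - (u' x)^2) * (u x)^2 \<noteq> 0" using E ux by simp
    have "((n$3 * u'' x) * (u x)^2 + (n$3 * u x) * (1 - (u' x)^2)) * u x = \<alpha> * n$3 * ((1 - (u' x)^2) * (u x)^2)"
      using eq d1 ux by (simp add: frac_eq_eq)
    hence "(n$3 * u x * u x) * (u'' x * u x + (1 - (u' x)^2)) = (n$3 * u x * u x) * (\<alpha> * (1 - (u' x)^2))"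
      by (simp add: algebra_simps power2_eq_square)
    hence "(u'' x * u x + (1 - (u' x)^2)) = \<alpha> * (1 - (u' x)^2)"
      using n3 ux by simp
    thus "u'' x / (1 - (u' x)^2) = (\<alpha> - 1) / u x"
      using E ux by (simp add: field_simps)
  qed
  have part2: "singular_maximal (\<alpha> + 1) R (I \<times> UNIV)"
    if H: "\<forall>x\<in>I. (u' x)^2 < 1 \<and> u'' x / (1 - (u' x)^2) = \<alpha> / u x"
  proof -
    have sl: "spacelike_surface R (I \<times> UNIV)"
      unfolding spacelike_surface_def
    proof (intro conjI ballI)
      show "open (I \<times> (UNIV::real set))" using oI by (simp add: open_Times)
    next
      fix p assume "p \<in> I \<times> (UNIV::real set)"
      then obtain s t where p: "p = (s,t)" and sI: "s \<in> I" by auto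
      have E: "1 - (u' s)^2 > 0" using H sI by auto
      have "u s > 0" using upos sI .
      then show "case p of (s, t) \<Rightarrow>
         (\<lambda>r. R r t) differentiable at s \<and> (\<lambda>r. R s r) differentiable at t \<and>
         (\<lambda>r. Xs R r t) differentiable at s \<and> (\<lambda>r. Xs R s r) differentiable at t \<and>
         (\<lambda>r. Xt R s r) differentiable at t \<and> 0 < EE R s t \<and> 0 < EE R s t * GG R s t - (FF R s t)\<^sup>2"
        unfolding p
        using differentiableI_vector[OF hXs[OF sI, of t]] differentiableI_vector[OF hXt[of s t]]
          differentiableI_vector[OF hXss[OF sI, of t]] differentiableI_vector[OF hXst[OF sI, of t]]
          differentiableI_vector[OF hXtt[of s t]] E
        by (simp add: EE_eq[OF sI] FF_eq[OF sI] GG_eq)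
    qed
    define w where "w = (\<lambda>x. sqrt (1 - (u' x)^2))"
    define N where "N = (\<lambda>p. vector [u' (fst p) / w (fst p), sinh (snd p) / w (fst p), cosh (snd p) / w (fst p)] :: real^3)"
    have cu': "continuous_on I u'"
      using d2 by (meson DERIV_isCont continuous_at_imp_continuous_on)
    have cu'2: "continuous_on (I \<times> UNIV) (\<lambda>p. u' (fst p))"
      by (rule continuous_on_compose2[OF cu']) (auto intro: continuous_intros)
    have wpos: "\<And>x. x \<in> I \<Longrightarrow> w x > 0" using H unfolding w_def by auto
    have cN: "continuous_on (I \<times> UNIV) N"
      unfolding N_def vec3_split w_def
      using wpos unfolding w_def
      by (intro continuous_intros cu'2) (auto, (metis less_irrefl)+)
    show ?thesis
      unfolding singular_maximal_def
    proof (intro conjI exI[of _ N] ballI)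
      show "spacelike_surface R (I \<times> UNIV)" by (rule sl)
      show "continuous_on (I \<times> UNIV) N" by (rule cN)
    next
      fix p assume "p \<in> I \<times> (UNIV::real set)"
      then obtain s t where p: "p = (s,t)" and sI: "s \<in> I" by auto
      show "case p of (s, t) \<Rightarrow> 0 < R s t $ 3" using p upos[OF sI]
        by (simp add: rot_surface_def)
    next
      fix p assume "p \<in> I \<times> (UNIV::real set)"
      then obtain s t where p: "p = (s,t)" and sI: "s \<in> I" by auto
      have E: "1 - (u' s)^2 > 0" using H sI by auto
      have us: "u s > 0" using upos sI .
      have hs: "u'' s / (1 - (u' s)^2) = \<alpha> / u s" using H sI by auto
      have ws: "w s > 0" using wpos sI .
      have w2: "w s * w s = 1 - (u' s)^2" using E unfolding w_def by (simp add: power2_eq_square[symmetric])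
      have c: "cosh t * cosh t = 1 + sinh t * sinh t" by (rule ch2)
      have un: "unit_normal R (N (s,t)) s t"
        unfolding unit_normal_def N_def Xs_eq[OF sI] Xt_eq linner3 fst_conv snd_conv
      proof (intro conjI)
        show "u' s / w s * 1 + sinh t / w s * (u' s * sinh t) - cosh t / w s * (u' s * cosh t) = 0"
          using ws by (simp add: field_simps ch1)
        show "u' s / w s * 0 + sinh t / w s * (u s * cosh t) - cosh t / w s * (u s * sinh t) = 0"
          by (simp add: field_simps)
        have "u' s / w s * (u' s / w s) + sinh t / w s * (sinh t / w s) - cosh t / w s * (cosh t / w s)
            = (u' s * u' s + sinh t * sinh t - cosh t * cosh t) / (w s * w s)"
          using ws by (simp add: field_simps)
        also have "\<dots> = - (w s * w s) / (w s * w s)" using w2 by (simp add: c power2_eq_square)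
        also have "\<dots> = -1" using ws by simp
        finally show "u' s / w s * (u' s / w s) + sinh t / w s * (sinh t / w s) - cosh t / w s * (cosh t / w s) = -1" .
      qed
      have "mean_curv R (N (s,t)) s t = - \<alpha> * linner (N (s,t)) avec / (R s t $ 3) - linner (N (s,t)) avec / (R s t $ 3)"
      proof -
        have x1: "linner (Xss R s t) (N (s,t)) = - u'' s / w s"
          unfolding Xss_eq[OF sI] N_def linner3 fst_conv snd_conv
          using ws by (simp add: field_simps ch1)
        have x3: "linner (Xtt R s t) (N (s,t)) = - u s / w s"
          unfolding Xtt_eq N_def linner3 fst_conv snd_conv
          using ws by (simp add: field_simps ch1)
        have na: "linner (N (s,t)) avec = - cosh t / w s"
          unfolding avec_def N_def linner3 fst_conv snd_conv by simp
        have R3: "R s t $ 3 = u s * cosh t" by (simp add: rot_surface_def)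
        have ch: "cosh t > 0" by simp
        have u2: "u'' s = \<alpha> * (1 - (u' s)^2) / u s" using hs E us by (simp add: field_simps)
        have "mean_curv R (N (s,t)) s t = (u'' s / w s * (u s)^2 + u s / w s * (1 - (u' s)^2)) / ((1 - (u' s)^2) * (u s)^2)"
          unfolding mean_curv_def x1 x3 EE_eq[OF sI] FF_eq[OF sI] GG_eq by simp
        also have "\<dots> = (\<alpha> + 1) / (w s * u s)"
          unfolding u2 using E us ws by (simp add: field_simps power2_eq_square)
        also have "\<dots> = - \<alpha> * linner (N (s,t)) avec / (R s t $ 3) - linner (N (s,t)) avec / (R s t $ 3)"
          unfolding na R3 using ch us ws by (simp add: field_simps)
        finally show ?thesis .
      qed
      then show "case p of (s, t) \<Rightarrow> unit_normal R (N (s,t)) s t \<and>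
           mean_curv R (N (s,t)) s t = - (\<alpha> + 1) * linner (N (s,t)) avec / (R s t $ 3)"
        using un p by (simp add: algebra_simps diff_divide_distrib)
    qed
  qed
  have part3: "xrot \<phi> ` ((\<lambda>(x,\<theta>). R x \<theta>) ` (I \<times> UNIV)) = (\<lambda>(x,\<theta>). R x \<theta>) ` (I \<times> UNIV)" for \<phi>
  proof -
    have xr: "xrot \<phi> (R x \<theta>) = R x (\<theta> + \<phi>)" for x \<theta>
      by (simp add: xrot_def rot_surface_def sinh_add cosh_add algebra_simps)
    show ?thesis
    proof
      show "xrot \<phi> ` ((\<lambda>(x,\<theta>). R x \<theta>) ` (I \<times> UNIV)) \<subseteq> (\<lambda>(x,\<theta>). R x \<theta>) ` (I \<times> UNIV)"
      proof clarsimp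
        fix x \<theta> assume "x \<in> I"
        then show "xrot \<phi> (R x \<theta>) \<in> (\<lambda>(x,\<theta>). R x \<theta>) ` (I \<times> UNIV)"
          unfolding xr by (auto intro!: image_eqI[where x="(x, \<theta> + \<phi>)"])
      qed
      show "(\<lambda>(x,\<theta>). R x \<theta>) ` (I \<times> UNIV) \<subseteq> xrot \<phi> ` ((\<lambda>(x,\<theta>). R x \<theta>) ` (I \<times> UNIV))"
      proof clarsimp
        fix x \<theta> assume "x \<in> I"
        then have "R x (\<theta> - \<phi>) \<in> (\<lambda>(x,\<theta>). R x \<theta>) ` (I \<times> UNIV)" by auto
        moreover have "R x \<theta> = xrot \<phi> (R x (\<theta> - \<phi>))" using xr[of x "\<theta> - \<phi>"] by simp
        ultimately show "R x \<theta> \<in> xrot \<phi> ` (\<lambda>(x,\<theta>). R x \<theta>) ` (I \<times> UNIV)" by blast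
      qed
    qed
  qed
  show ?thesis using part1 part2 part3 by blast
qed
end
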